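(* Let $\Gamma$ be a Deza graph with parameters $(n,k,k-1,a)$, $k>1$, $\beta=1$. For an $NA$-vertex $x$, $(x')_b=(x_b)'$.
   Context: A Deza graph with parameters $(n,k,b,a)$, $a\le b$, is a $k$-regular graph on $n$ vertices in which any two distinct vertices have $a$ or $b$ common neighbours; $\beta$ is the number of vertices $u\ne v$ with exactly $b$ common neighbours with a given vertex $v$. Since $\beta=1$, for each vertex $x$ let $x_b$ denote the unique vertex having $b=k-1$ common neighbours with $x$. A vertex $x$ is an $A$-vertex if $x$ is adjacent to $x_b$, and an $NA$-vertex otherwise (if $x$ is $NA$ then so is $x_b$). For an $NA$-vertex $x$, $x'$ denotes the unique neighbour of $x$ not adjacent to $x_b$. *)

theory Defs
  imports Main
begin

definition simple_graph :: "'a set \<Rightarrow> ('a \<Rightarrow> 'a \<Rightarrow> bool) \<Rightarrow> bool" where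
  "simple_graph V E \<longleftrightarrow> finite V \<and> (\<forall>x y. E x y \<longrightarrow> x \<in> V \<and> y \<in> V)
     \<and> (\<forall>x y. E x y \<longrightarrow> E y x) \<and> (\<forall>x. \<not> E x x)"

definition nbrs :: "'a set \<Rightarrow> ('a \<Rightarrow> 'a \<Rightarrow> bool) \<Rightarrow> 'a \<Rightarrow> 'a set" where
  "nbrs V E x = {y \<in> V. E x y}"

definition common :: "'a set \<Rightarrow> ('a \<Rightarrow> 'a \<Rightarrow> bool) \<Rightarrow> 'a \<Rightarrow> 'a \<Rightarrow> nat" where
  "common V E x y = card (nbrs V E x \<inter> nbrs V E y)"

definition deza_graph :: "'a set \<Rightarrow> ('a \<Rightarrow> 'a \<Rightarrow> bool) \<Rightarrow> nat \<Rightarrow> nat \<Rightarrow> nat \<Rightarrow> nat \<Rightarrow> bool" where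
  "deza_graph V E n k b a \<longleftrightarrow> simple_graph V E \<and> card V = n \<and> a \<le> b
     \<and> (\<forall>x\<in>V. card (nbrs V E x) = k)
     \<and> (\<forall>x\<in>V. \<forall>y\<in>V. x \<noteq> y \<longrightarrow> common V E x y = a \<or> common V E x y = b)"

definition beta_at :: "'a set \<Rightarrow> ('a \<Rightarrow> 'a \<Rightarrow> bool) \<Rightarrow> nat \<Rightarrow> 'a \<Rightarrow> nat" where
  "beta_at V E b v = card {u \<in> V. u \<noteq> v \<and> common V E u v = b}"

definition xb :: "'a set \<Rightarrow> ('a \<Rightarrow> 'a \<Rightarrow> bool) \<Rightarrow> nat \<Rightarrow> 'a \<Rightarrow> 'a" where
  "xb V E b x = (THE u. u \<in> V \<and> u \<noteq> x \<and> common V E u x = b)"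

definition A_vertex :: "'a set \<Rightarrow> ('a \<Rightarrow> 'a \<Rightarrow> bool) \<Rightarrow> nat \<Rightarrow> 'a \<Rightarrow> bool" where
  "A_vertex V E b x \<longleftrightarrow> x \<in> V \<and> E x (xb V E b x)"

definition NA_vertex :: "'a set \<Rightarrow> ('a \<Rightarrow> 'a \<Rightarrow> bool) \<Rightarrow> nat \<Rightarrow> 'a \<Rightarrow> bool" where
  "NA_vertex V E b x \<longleftrightarrow> x \<in> V \<and> \<not> E x (xb V E b x)"

definition xprime :: "'a set \<Rightarrow> ('a \<Rightarrow> 'a \<Rightarrow> bool) \<Rightarrow> nat \<Rightarrow> 'a \<Rightarrow> 'a" where
  "xprime V E b x = (THE y. y \<in> V \<and> E x y \<and> \<not> E y (xb V E b x))"

end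

theory Submission
  imports Defs
begin

locale dz =
  fixes V :: "'a set" and E :: "'a \<Rightarrow> 'a \<Rightarrow> bool" and k a :: nat
  assumes sg: "simple_graph V E"
    and reg: "\<forall>x\<in>V. card (nbrs V E x) = k"
    and cm: "\<forall>x\<in>V. \<forall>y\<in>V. x \<noteq> y \<longrightarrow> common V E x y = a \<or> common V E x y = k - 1"
    and ale: "a \<le> k - 1"
    and k1: "k > 1"
    and bt: "\<forall>v\<in>V. beta_at V E (k - 1) v = 1"
begin

abbreviation N where "N \<equiv> nbrs V E"
abbreviation s where "s \<equiv> xb V E (k - 1)"

lemma fin: "finite V" using sg by (simp add: simple_graph_def)
lemma symE: "E x y \<Longrightarrow> E y x" using sg by (simp add: simple_graph_def)
lemma inV: "E x y \<Longrightarrow> x \<in> V \<and> y \<in> V" using sg by (simp add: simple_graph_def)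
lemma irr: "\<not> E x x" using sg by (simp add: simple_graph_def)
lemma finN: "finite (N u)" using fin by (simp add: nbrs_def)

lemma comm_sym: "common V E u w = common V E w u"
  by (simp add: common_def Int_commute)

lemma s_props: assumes "u \<in> V"
  shows "s u \<in> V \<and> s u \<noteq> u \<and> common V E (s u) u = k - 1
     \<and> (\<forall>w\<in>V. w \<noteq> u \<and> common V E w u = k - 1 \<longrightarrow> w = s u)"
proof -
  have "card {w \<in> V. w \<noteq> u \<and> common V E w u = k - 1} = 1"
    using bt assms by (simp add: beta_at_def)
  then obtain z where z: "{w \<in> V. w \<noteq> u \<and> common V E w u = k - 1} = {z}"
    using card_1_singletonE by blast
  have "s u = z" unfolding xb_def
    by (rule the_equality) (use z in blast)+
  thus ?thesis using z by blast
qed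

lemma ss: assumes "u \<in> V" shows "s (s u) = u"
proof -
  have "s u \<in> V" "s u \<noteq> u" "common V E u (s u) = k - 1"
    using s_props[OF assms] comm_sym by auto
  thus ?thesis using s_props[of "s u"] assms by metis
qed

lemma common_val: assumes "u \<in> V" "w \<in> V"
  shows "common V E u w = a + (if w = u then k - a else 0) + (if w = s u then k - 1 - a else 0)"
proof -
  have su: "s u \<in> V" "s u \<noteq> u" "common V E u (s u) = k - 1"
    using s_props[OF assms(1)] comm_sym by auto
  show ?thesis
  proof (cases "w = u")
    case True
    have "common V E u u = k" using reg assms by (simp add: common_def)
    then show ?thesis using True su ale by simp
  next
    case False
    show ?thesis
    proof (cases "w = s u")
      case True then show ?thesis using su False ale by simp
    next
      case F2: False
      have "common V E w u \<noteq> k - 1" using s_props[OF assms(1)] assms F2 False by blast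
      then have "common V E u w = a" using cm assms False comm_sym by metis
      then show ?thesis using False F2 by simp
    qed
  qed
qed

lemma card_as_sum: "card (N u \<inter> N w) = (\<Sum>t\<in>N u. if E w t then 1 else 0)"
proof -
  have "N u \<inter> N w = {t \<in> N u. E w t}" by (auto simp: nbrs_def)
  thus ?thesis using finN by (auto simp: sum.If_cases intro: arg_cong[where f=card])
qed

lemma dc: "(\<Sum>w\<in>N v. common V E u w) = (\<Sum>t\<in>N u. common V E v t)"
proof -
  have "(\<Sum>w\<in>N v. common V E u w) = (\<Sum>w\<in>N v. \<Sum>t\<in>N u. if E w t then 1 else 0)"
    unfolding common_def using card_as_sum by simp
  also have "\<dots> = (\<Sum>t\<in>N u. \<Sum>w\<in>N v. if E w t then 1 else 0)" by (rule sum.swap)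
  also have "\<dots> = (\<Sum>t\<in>N u. \<Sum>w\<in>N v. if E t w then 1 else 0)"
    by (intro sum.cong refl) (auto dest: symE)
  also have "\<dots> = (\<Sum>t\<in>N u. common V E v t)"
    unfolding common_def using card_as_sum by simp
  finally show ?thesis .
qed

lemma sum_val: assumes "u \<in> V" "v \<in> V"
  shows "(\<Sum>w\<in>N v. common V E u w) = a * k + (if E v u then k - a else 0)
            + (if E v (s u) then k - 1 - a else 0)"
proof -
  have "(\<Sum>w\<in>N v. common V E u w) =
     (\<Sum>w\<in>N v. a + (if w = u then k - a else 0) + (if w = s u then k - 1 - a else 0))"
    using common_val assms by (intro sum.cong refl) (auto simp: nbrs_def)
  also have "\<dots> = a * card (N v) + (\<Sum>w\<in>N v. if w = u then k - a else 0)
       + (\<Sum>w\<in>N v. if w = s u then k - 1 - a else 0)"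
    by (simp add: sum.distrib)
  also have "\<dots> = a * k + (if E v u then k - a else 0)
            + (if E v (s u) then k - 1 - a else 0)"
    using reg assms finN by (simp add: sum.delta nbrs_def inV)
  finally show ?thesis .
qed

lemma a_lt: assumes "u \<in> V" shows "a < k - 1"
proof (rule ccontr)
  assume "\<not> a < k - 1"
  then have aa: "a = k - 1" using ale by simp
  have e: "{w \<in> V. w \<noteq> u \<and> common V E w u = k - 1} = V - {u}"
    using cm aa assms by auto
  have "card {w \<in> V. w \<noteq> u \<and> common V E w u = k - 1} = 1" using bt assms by (simp add: beta_at_def)
  then have "card (V - {u}) = 1" using e by metis
  moreover have "N u \<subseteq> V - {u}" by (auto simp: nbrs_def irr)
  ultimately have "card (N u) \<le> 1" using fin by (metis card_mono finite_Diff)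
  then show False using reg assms k1 by simp
qed

lemma swap: assumes "u \<in> V" "v \<in> V" shows "E (s u) v \<longleftrightarrow> E u (s v)"
proof -
  have "(\<Sum>w\<in>N v. common V E u w) = (\<Sum>t\<in>N u. common V E v t)" by (rule dc)
  then have "(if E v u then k - a else 0) + (if E v (s u) then k - 1 - a else 0)
     = (if E u v then k - a else 0) + (if E u (s v) then k - 1 - a else 0)"
    using sum_val assms by simp
  moreover have "E v u = E u v" using symE by blast
  ultimately have "(if E v (s u) then k - 1 - a else 0) = (if E u (s v) then k - 1 - a else 0)"
    by simp
  then have "E v (s u) = E u (s v)" using a_lt[OF assms(1)] by (auto split: if_splits)
  thus ?thesis using symE by blast
qed

lemma xprime_props: assumes "u \<in> V"
  shows "xprime V E (k - 1) u \<in> V \<and> E u (xprime V E (k - 1) u) \<and> \<not> E (xprime V E (k - 1) u) (s u)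
    \<and> (\<forall>y. y \<in> V \<and> E u y \<and> \<not> E y (s u) \<longrightarrow> y = xprime V E (k - 1) u)"
proof -
  have su: "s u \<in> V" "common V E u (s u) = k - 1"
    using s_props[OF assms] comm_sym by auto
  have "card (N u - N (s u)) = card (N u) - card (N u \<inter> N (s u))"
    using finN by (simp add: card_Diff_subset_Int)
  also have "\<dots> = 1" using su reg assms k1 by (simp add: common_def)
  finally obtain p where p: "N u - N (s u) = {p}" using card_1_singletonE by blast
  have eq: "{y. y \<in> V \<and> E u y \<and> \<not> E y (s u)} = N u - N (s u)"
    by (auto simp: nbrs_def dest: symE)
  have "xprime V E (k - 1) u = p" unfolding xprime_def
    by (rule the_equality) (use p eq in blast)+
  thus ?thesis using p eq by blast
qed

end

theorem lemma12:
  fixes V :: "'a set" and E :: "'a \<Rightarrow> 'a \<Rightarrow> bool" and n k a :: nat and x :: 'a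
  assumes "deza_graph V E n k (k - 1) a"
    and "k > 1"
    and "\<forall>v\<in>V. beta_at V E (k - 1) v = 1"
    and "NA_vertex V E (k - 1) x"
  shows "xb V E (k - 1) (xprime V E (k - 1) x) = xprime V E (k - 1) (xb V E (k - 1) x)"
proof -
  interpret dz V E k a
    using assms unfolding deza_graph_def by unfold_locales auto
  have x: "x \<in> V" "\<not> E x (s x)" using assms(4) by (auto simp: NA_vertex_def)
  define p where "p = xprime V E (k - 1) x"
  have p: "p \<in> V" "E x p" "\<not> E p (s x)" using xprime_props[OF x(1)] p_def by auto
  have sx: "s x \<in> V" "s (s x) = x" using s_props[OF x(1)] ss[OF x(1)] by auto
  have "\<not> E (s p) x" using swap[OF p(1) x(1)] p by simp
  moreover have "E (s p) (s x)" using swap[OF p(1) sx(1)] p sx symE by simp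
  moreover have "s p \<in> V" using s_props[OF p(1)] by simp
  ultimately show ?thesis using xprime_props[OF sx(1)] sx p_def by (metis symE)
qed

end
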